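(* Let $A=\mathbb C\langle u^{\pm1},v^{\pm1}\rangle$ and $h=u+v+u^{-1}+v^{-1}+u^{-1}v^{-1}$. The elements $\pi(h^k)$, $k=1,2,3,\dots$, of $A/[A,A]$ are linearly independent over $\mathbb C$.
   Context: $A$ is the group algebra over $\mathbb C$ of the free group on two generators $u,v$; $[A,A]$ is the linear span of all $ab-ba$, $a,b\in A$; $\pi:A\to A/[A,A]$ is the natural projection. *)

theory Defs
  imports Complex_Main
begin

text \<open>Free group on two generators u, v as reduced words. A letter is a pair
 (generator, inverted): (False,_) is u, (True,_) is v; second component True means inverse.\<close>

type_synonym letter = "bool \<times> bool"

definition inv_letter :: "letter \<Rightarrow> letter" where
  "inv_letter x = (fst x, \<not> snd x)"

fun push :: "letter \<Rightarrow> letter list \<Rightarrow> letter list" where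
  "push x [] = [x]"
| "push x (y # ys) = (if y = inv_letter x then ys else x # y # ys)"

definition fg_mult :: "letter list \<Rightarrow> letter list \<Rightarrow> letter list" where
  "fg_mult a b = foldr push a b"

definition reduced :: "letter list \<Rightarrow> bool" where
  "reduced w \<longleftrightarrow> (\<forall>i. Suc i < length w \<longrightarrow> w ! Suc i \<noteq> inv_letter (w ! i))"

text \<open>Group algebra A = C[F_2]: finitely supported complex functions on reduced words.\<close>
definition GA :: "(letter list \<Rightarrow> complex) set" where
  "GA = {f. finite {w. f w \<noteq> 0} \<and> (\<forall>w. f w \<noteq> 0 \<longrightarrow> reduced w)}"

definition conv :: "(letter list \<Rightarrow> complex) \<Rightarrow> (letter list \<Rightarrow> complex) \<Rightarrow> (letter list \<Rightarrow> complex)" where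
  "conv f g = (\<lambda>w. \<Sum>(x, y) \<in> {x. f x \<noteq> 0} \<times> {y. g y \<noteq> 0}.
                    if fg_mult x y = w then f x * g y else 0)"

definition delta :: "letter list \<Rightarrow> (letter list \<Rightarrow> complex)" where
  "delta w = (\<lambda>x. if x = w then 1 else 0)"

definition ga_pow :: "(letter list \<Rightarrow> complex) \<Rightarrow> nat \<Rightarrow> (letter list \<Rightarrow> complex)" where
  "ga_pow f n = (conv f ^^ n) (delta [])"

definition comm_space :: "(letter list \<Rightarrow> complex) set" where
  "comm_space = {f. \<exists>(n::nat) (c::nat \<Rightarrow> complex) F G. (\<forall>i<n. F i \<in> GA \<and> G i \<in> GA) \<and>
      f = (\<lambda>w. \<Sum>i<n. c i * (conv (F i) (G i) w - conv (G i) (F i) w))}"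

definition gen_u :: letter where "gen_u = (False, False)"
definition gen_v :: letter where "gen_v = (True, False)"

definition hh :: "letter list \<Rightarrow> complex" where
  "hh = (\<lambda>w. delta [gen_u] w + delta [gen_v] w + delta [inv_letter gen_u] w
            + delta [inv_letter gen_v] w + delta [inv_letter gen_u, inv_letter gen_v] w)"

end

theory Submission
  imports Defs "HOL-Computational_Algebra.Polynomial"
begin

definition chi :: "complex \<Rightarrow> letter list \<Rightarrow> complex" where
  "chi t w = prod_list (map (\<lambda>l. if fst l then 1 else if snd l then inverse t else t) w)"

definition tau :: "complex \<Rightarrow> (letter list \<Rightarrow> complex) \<Rightarrow> complex" where
  "tau t f = (\<Sum>w\<in>{w. f w \<noteq> 0}. f w * chi t w)"

lemma tau_superset: "finite S \<Longrightarrow> {w. f w \<noteq> 0} \<subseteq> S \<Longrightarrow> tau t f = (\<Sum>w\<in>S. f w * chi t w)"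
  unfolding tau_def by (rule sum.mono_neutral_left) auto

lemma chi_push: "t \<noteq> 0 \<Longrightarrow> chi t (push a ys) = chi t [a] * chi t ys"
  by (cases ys) (auto simp: chi_def inv_letter_def)

lemma chi_mult: "t \<noteq> 0 \<Longrightarrow> chi t (fg_mult a b) = chi t a * chi t b"
  unfolding fg_mult_def
  by (induction a) (simp_all add: chi_push, simp_all add: chi_def)

lemma supp_conv: "{w. conv f g w \<noteq> 0} \<subseteq> (\<lambda>(x,y). fg_mult x y) ` ({x. f x\<noteq>0} \<times> {y. g y\<noteq>0})"
proof
  fix w assume "w \<in> {w. conv f g w \<noteq> 0}"
  then have "conv f g w \<noteq> 0" by simp
  then obtain p where "p \<in> {x. f x\<noteq>0} \<times> {y. g y\<noteq>0}"
    "(case p of (x, y) \<Rightarrow> if fg_mult x y = w then f x * g y else 0) \<noteq> 0"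
    unfolding conv_def using sum.not_neutral_contains_not_neutral by blast
  then show "w \<in> (\<lambda>(x,y). fg_mult x y) ` ({x. f x\<noteq>0} \<times> {y. g y\<noteq>0})"
    by (cases p) (auto split: if_splits)
qed

lemma finite_conv: "finite {x. f x\<noteq>0} \<Longrightarrow> finite {y. g y\<noteq>0} \<Longrightarrow> finite {w. conv f g w \<noteq> 0}"
  by (rule finite_subset[OF supp_conv]) auto

lemma tau_conv:
  assumes t: "t \<noteq> 0" and ff: "finite {x. f x\<noteq>0}" and fg: "finite {y. g y\<noteq>0}"
  shows "tau t (conv f g) = tau t f * tau t g"
proof -
  define P where "P = {x. f x\<noteq>0} \<times> {y. g y\<noteq>0}"
  define S where "S = (\<lambda>(x,y). fg_mult x y) ` P"
  have fP: "finite P" using ff fg P_def by simp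
  have fS: "finite S" using fP S_def by simp
  have "tau t (conv f g) = (\<Sum>w\<in>S. conv f g w * chi t w)"
    by (rule tau_superset[OF fS]) (use supp_conv S_def P_def in auto)
  also have "\<dots> = (\<Sum>w\<in>S. \<Sum>p\<in>P. (if fg_mult (fst p) (snd p) = w then f (fst p) * g (snd p) else 0) * chi t w)"
    unfolding conv_def P_def[symmetric] by (simp add: sum_distrib_right case_prod_beta)
  also have "\<dots> = (\<Sum>p\<in>P. \<Sum>w\<in>S. (if fg_mult (fst p) (snd p) = w then f (fst p) * g (snd p) else 0) * chi t w)"
    by (rule sum.swap)
  also have "\<dots> = (\<Sum>p\<in>P. f (fst p) * g (snd p) * chi t (fg_mult (fst p) (snd p)))"
  proof (rule sum.cong[OF refl])
    fix p assume "p \<in> P"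
    then have "fg_mult (fst p) (snd p) \<in> S" unfolding S_def by (auto simp: case_prod_beta)
    then show "(\<Sum>w\<in>S. (if fg_mult (fst p) (snd p) = w then f (fst p) * g (snd p) else 0) * chi t w)
       = f (fst p) * g (snd p) * chi t (fg_mult (fst p) (snd p))"
    proof -
      have *: "\<And>w. (if fg_mult (fst p) (snd p) = w then f (fst p) * g (snd p) else 0) * chi t w
          = (if fg_mult (fst p) (snd p) = w then f (fst p) * g (snd p) * chi t w else 0)" by simp
      show ?thesis unfolding * using fS \<open>fg_mult (fst p) (snd p) \<in> S\<close> by (simp add: sum.delta)
    qed
  qed
  also have "\<dots> = (\<Sum>p\<in>P. (f (fst p) * chi t (fst p)) * (g (snd p) * chi t (snd p)))"
    by (simp add: chi_mult[OF t] mult_ac)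
  also have "\<dots> = tau t f * tau t g"
    unfolding tau_def P_def sum_product sum.cartesian_product by (simp add: case_prod_beta)
  finally show ?thesis .
qed

lemma tau_lin:
  assumes "finite I" and fin: "\<And>i. i \<in> I \<Longrightarrow> finite {w. g i w \<noteq> 0}"
  shows "tau t (\<lambda>w. \<Sum>i\<in>I. a i * g i w) = (\<Sum>i\<in>I. a i * tau t (g i))"
proof -
  define S where "S = (\<Union>i\<in>I. {w. g i w \<noteq> 0})"
  have fS: "finite S" using assms S_def by auto
  have "tau t (\<lambda>w. \<Sum>i\<in>I. a i * g i w) = (\<Sum>w\<in>S. (\<Sum>i\<in>I. a i * g i w) * chi t w)"
  proof (rule tau_superset[OF fS])
    show "{w. (\<Sum>i\<in>I. a i * g i w) \<noteq> 0} \<subseteq> S"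
    proof
      fix w assume "w \<in> {w. (\<Sum>i\<in>I. a i * g i w) \<noteq> 0}"
      then obtain i where "i \<in> I" "a i * g i w \<noteq> 0"
        using sum.not_neutral_contains_not_neutral by force
      then show "w \<in> S" unfolding S_def by auto
    qed
  qed
  also have "\<dots> = (\<Sum>i\<in>I. a i * (\<Sum>w\<in>S. g i w * chi t w))"
    by (simp add: sum_distrib_right sum_distrib_left mult_ac sum.swap[of _ S])
  also have "\<dots> = (\<Sum>i\<in>I. a i * tau t (g i))"
    by (rule sum.cong[OF refl], subst tau_superset[OF fS]) (auto simp: S_def)
  finally show ?thesis .
qed

lemma tau_diff:
  assumes "finite {w. f w \<noteq> 0}" "finite {w. g w \<noteq> 0}"
  shows "tau t (\<lambda>w. f w - g w) = tau t f - tau t g"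
proof -
  define S where "S = {w. f w \<noteq> 0} \<union> {w. g w \<noteq> 0}"
  have fS: "finite S" using assms S_def by auto
  have "tau t (\<lambda>w. f w - g w) = (\<Sum>w\<in>S. (f w - g w) * chi t w)"
    by (rule tau_superset[OF fS]) (auto simp: S_def)
  also have "\<dots> = (\<Sum>w\<in>S. f w * chi t w) - (\<Sum>w\<in>S. g w * chi t w)"
    by (simp add: left_diff_distrib sum_subtractf)
  also have "\<dots> = tau t f - tau t g"
    by (subst (1 2) tau_superset[OF fS]) (auto simp: S_def)
  finally show ?thesis .
qed

lemma tau_comm:
  assumes t: "t \<noteq> 0" and "f \<in> comm_space" shows "tau t f = 0"
proof -
  have "\<exists>(n::nat) (c::nat \<Rightarrow> complex) F G. (\<forall>i<n. F i \<in> GA \<and> G i \<in> GA) \<and>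
      f = (\<lambda>w. \<Sum>i<n. c i * (conv (F i) (G i) w - conv (G i) (F i) w))"
    using assms(2) unfolding comm_space_def by simp
  then obtain n :: nat and c :: "nat \<Rightarrow> complex" and F G where FG: "\<forall>i<n. F i \<in> GA \<and> G i \<in> GA"
    and f: "f = (\<lambda>w. \<Sum>i<n. c i * (conv (F i) (G i) w - conv (G i) (F i) w))"
    by blast
  have fin: "finite {w. F i w \<noteq> 0}" "finite {w. G i w \<noteq> 0}" if "i < n" for i
    using FG that by (auto simp: GA_def)
  have fc: "finite {w. conv (F i) (G i) w \<noteq> 0}" "finite {w. conv (G i) (F i) w \<noteq> 0}"
    if "i < n" for i
    using fin[OF that] by (simp_all add: finite_conv)
  have fd: "finite {w. conv (F i) (G i) w - conv (G i) (F i) w \<noteq> 0}" if "i \<in> {..<n}" for i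
    by (rule finite_subset[of _ "{w. conv (F i) (G i) w \<noteq> 0} \<union> {w. conv (G i) (F i) w \<noteq> 0}"])
       (use fc that in auto)
  have "tau t f = (\<Sum>i<n. c i * tau t (\<lambda>w. conv (F i) (G i) w - conv (G i) (F i) w))"
    unfolding f by (rule tau_lin[OF finite_lessThan fd])
  also have "\<dots> = 0"
  proof (rule sum.neutral, rule ballI)
    fix i assume i: "i \<in> {..<n}"
    then have "i < n" by simp
    show "c i * tau t (\<lambda>w. conv (F i) (G i) w - conv (G i) (F i) w) = 0"
      using fin[OF \<open>i < n\<close>] fc[OF \<open>i < n\<close>]
      by (simp add: tau_diff tau_conv[OF t])
  qed
  finally show ?thesis .
qed

lemma ga_pow_Suc: "ga_pow f (Suc k) = conv f (ga_pow f k)"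
  by (simp add: ga_pow_def)

lemma finite_hh: "finite {w. hh w \<noteq> 0}"
  by (rule finite_subset[of _ "{[gen_u],[gen_v],[inv_letter gen_u],[inv_letter gen_v],[inv_letter gen_u, inv_letter gen_v]}"])
     (auto simp: hh_def delta_def)

lemma finite_pow: "finite {w. ga_pow hh k w \<noteq> 0}"
  by (induction k) (auto simp: ga_pow_Suc finite_conv finite_hh, auto simp: ga_pow_def delta_def)

lemma tau_hh: "tau t hh = t + 2 + 2 / t"
proof -
  have "tau t hh = (\<Sum>w\<in>{[gen_u],[gen_v],[inv_letter gen_u],[inv_letter gen_v],[inv_letter gen_u, inv_letter gen_v]}. hh w * chi t w)"
    by (rule tau_superset) (auto simp: hh_def delta_def)
  also have "\<dots> = t + 2 + 2 / t"
    by (simp add: hh_def delta_def gen_u_def gen_v_def inv_letter_def chi_def divide_inverse)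
  finally show ?thesis .
qed

lemma tau_pow: "t \<noteq> 0 \<Longrightarrow> tau t (ga_pow hh k) = (t + 2 + 2 / t) ^ k"
proof (induction k)
  case 0
  have "tau t (delta []) = (\<Sum>w\<in>{[]}. delta [] w * chi t w)"
    by (rule tau_superset) (auto simp: delta_def)
  then show ?case by (simp add: ga_pow_def delta_def chi_def)
next
  case (Suc k)
  then show ?case by (simp add: ga_pow_Suc tau_conv finite_hh finite_pow tau_hh)
qed

lemma r_inj: "inj_on (\<lambda>m::nat. complex_of_real (real m + 2 + 2 / real m)) {2..}"
proof
  fix m m' :: nat assume m: "m \<in> {2..}" "m' \<in> {2..}"
    and e: "complex_of_real (real m + 2 + 2 / real m) = complex_of_real (real m' + 2 + 2 / real m')"
  have "real m + 2 + 2 / real m = real m' + 2 + 2 / real m'" using e of_real_eq_iff by blast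
  then have e2: "real m + 2 / real m = real m' + 2 / real m'" by simp
  have "(real m - real m') * (real m * real m' - 2) = 0"
    using e2 m by (simp add: field_simps)
  moreover have "real m * real m' \<ge> 2 * 2"
  proof (rule mult_mono)
    show "2 \<le> real m" "2 \<le> real m'" using m by auto
  qed auto
  ultimately show "m = m'" by simp
qed

theorem mainTheorem4:
  shows "\<forall>(n::nat) (c::nat \<Rightarrow> complex).
           (\<lambda>w. \<Sum>k\<in>{1..n}. c k * ga_pow hh k w) \<in> comm_space
           \<longrightarrow> (\<forall>k\<in>{1..n}. c k = 0)"
proof (intro allI impI)
  fix n and c :: "nat \<Rightarrow> complex"
  assume H: "(\<lambda>w. \<Sum>k\<in>{1..n}. c k * ga_pow hh k w) \<in> comm_space"
  define p where "p = (\<Sum>k\<in>{1..n}. monom (c k) k)"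
  have ev: "poly p (of_real (real m + 2 + 2 / real m)) = 0" if "m \<ge> 2" for m :: nat
  proof -
    define t where "t = complex_of_nat m"
    have t: "t \<noteq> 0" using that t_def by simp
    have "0 = tau t (\<lambda>w. \<Sum>k\<in>{1..n}. c k * ga_pow hh k w)" using tau_comm[OF t H] by simp
    also have "\<dots> = (\<Sum>k\<in>{1..n}. c k * (t + 2 + 2 / t) ^ k)"
      by (subst tau_lin) (auto simp: finite_pow tau_pow[OF t])
    also have "\<dots> = poly p (t + 2 + 2 / t)"
      by (simp add: p_def poly_sum poly_monom)
    finally show ?thesis by (simp add: t_def)
  qed
  have "p = 0"
  proof (rule ccontr)
    assume "p \<noteq> 0"
    then have "finite {x. poly p x = 0}" by (rule poly_roots_finite)
    moreover have "(\<lambda>m::nat. complex_of_real (real m + 2 + 2 / real m)) ` {2..} \<subseteq> {x. poly p x = 0}"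
      using ev by auto
    moreover have "infinite ((\<lambda>m::nat. complex_of_real (real m + 2 + 2 / real m)) ` {2..})"
      using r_inj finite_imageD infinite_Ici by blast
    ultimately show False using finite_subset by blast
  qed
  show "\<forall>k\<in>{1..n}. c k = 0"
  proof
    fix k assume k: "k \<in> {1..n}"
    have "0 = coeff p k" using \<open>p = 0\<close> by simp
    also have "\<dots> = (\<Sum>j\<in>{1..n}. if j = k then c j else 0)"
      by (simp add: p_def coeff_sum coeff_monom)
    also have "\<dots> = c k" using k by simp
    finally show "c k = 0" by simp
  qed
qed

end
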